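(* Let $X=(V,E,T)$ be an $(s,k,K)$-two layer system, let $\lambda_{\operatorname{gr}}\ge0$ be such that the ground graph of $X$ is a $\lambda_{\operatorname{gr}}$-expander, and let $C\subseteq\mathbb{F}_p^V$ be a linear code modelled over $X$ ($p$ a prime power). Then for every $\underline{c}\in C\setminus\{\underline{0}\}$, $$\|\underline{c}\|\ge\frac{16}{s^4(s-1)^2k}\left(1-s(s-1)(k-1)\lambda_{\operatorname{gr}}\right).$$
   Context: An $(s,k,K)$-two layer system is a triple $X=(V,E,T)$ where: $V$ is a finite set; $E\subseteq 2^V$ with $|\tau|=k$ for all $\tau\in E$ and $\bigcup_{\tau\in E}\tau=V$; $T\subseteq 2^E$ with $|\sigma|=K$ for all $\sigma\in T$ and $\bigcup_{\sigma\in T}\sigma=E$. Write $v\in\sigma$ if $v\in\tau$ for some $\tau\in\sigma$; it is required that $2\le|\{\tau\in\sigma:v\in\tau\}|\le s$ for all $\sigma\in T$, $v\in\sigma$. A positive $w:T\to\mathbb{R}_{>0}$ is fixed and extended by $w(\tau)=\sum_{\sigma\ni\tau}w(\sigma)$ ($\tau\in E$), $w(v)=\sum_{\sigma\in T,v\in\sigma}w(\sigma)$, $w(B)=\sum_{\eta\in B}w(\eta)$. The ground graph has vertex set $V$, distinct $u,v$ adjacent iff some $\tau\in E$ contains both, with weight $\sum_{\tau\in E,u,v\in\tau}w(\tau)$. For a weighted graph $(V,E,m)$: $m(v)=\sum_{e\ni v}m(e)$, $m(U)=\sum_{v\in U}m(v)$, $m(U_1,U_2)=\sum_{(u_1,u_2)\in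 U_1\times U_2,\{u_1,u_2\}\in E}m(\{u_1,u_2\})$, $h_G=\min_{\emptyset\ne U\subsetneq V}\frac{m(U,V\setminus U)m(V)}{m(U)m(V\setminus U)}$; $G$ is a $\lambda$-expander if $1-h_G\le\lambda$. Codes: $\mathbb{F}_p$ is the field with $p$ elements; $\underline{e}\cdot\underline{c}=\sum_v\underline{e}(v)\underline{c}(v)$, $\operatorname{supp}(\underline{e})=\{v:\underline{e}(v)\neq0\}$. A linear code $C\subseteq\mathbb{F}_p^V$ is modelled over $X$ if there is $\mathcal{E}\subseteq\mathbb{F}_p^V$ with $C=\{\underline{c}:\underline{e}\cdot\underline{c}=0\ \forall\underline{e}\in\mathcal{E}\}$ such that $\underline{e}\mapsto\operatorname{supp}(\underline{e})$ is a bijection $\mathcal{E}\to E$, and a set $\mathcal{T}$ of linear dependencies (functions $\operatorname{ld}:\mathcal{E}\to\mathbb{F}_p$ with $\sum_{\underline{e}}\operatorname{ld}(\underline{e})(\underline{e}\cdot\underline{c})=0$ for all $\underline{c}$) with $T=\{\{\operatorname{supp}(\underline{e}):\operatorname{ld}(\underline{e})\ne0\}:\operatorname{ld}\in\mathcal{T}\}$. The norm is $\|\underline{c}\|=\frac1{w(V)}\sum_{v:\underline{c}(v)\neq0}w(v)$. *)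

theory Defs
  imports Main "HOL-Library.FuncSet" Complex_Main
begin

text \<open>V : vertices, E : k-subsets of V, T : K-subsets of E.
  For \<sigma> \<in> T, a vertex v is "in \<sigma>" iff v \<in> \<Union>\<sigma>.\<close>

definition two_layer_system ::
  "nat \<Rightarrow> nat \<Rightarrow> nat \<Rightarrow> 'v set \<Rightarrow> 'v set set \<Rightarrow> 'v set set set \<Rightarrow> bool" where
  "two_layer_system s k K V E T \<longleftrightarrow>
     finite V \<and>
     (\<forall>\<tau>\<in>E. \<tau> \<subseteq> V \<and> card \<tau> = k) \<and> \<Union>E = V \<and>
     (\<forall>\<sigma>\<in>T. \<sigma> \<subseteq> E \<and> card \<sigma> = K) \<and> \<Union>T = E \<and>
     (\<forall>\<sigma>\<in>T. \<forall>v\<in>\<Union>\<sigma>. 2 \<le> card {\<tau>\<in>\<sigma>. v \<in> \<tau>} \<and> card {\<tau>\<in>\<sigma>. v \<in> \<tau>} \<le> s)"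

definition wE :: "'v set set set \<Rightarrow> ('v set set \<Rightarrow> real) \<Rightarrow> 'v set \<Rightarrow> real" where
  "wE T w \<tau> = (\<Sum>\<sigma>\<in>{\<sigma>\<in>T. \<tau> \<in> \<sigma>}. w \<sigma>)"

definition wV :: "'v set set set \<Rightarrow> ('v set set \<Rightarrow> real) \<Rightarrow> 'v \<Rightarrow> real" where
  "wV T w v = (\<Sum>\<sigma>\<in>{\<sigma>\<in>T. v \<in> \<Union>\<sigma>}. w \<sigma>)"

text \<open>A weighted graph is given by a finite vertex set V, an adjacency relation adj
  (symmetric, irreflexive) and an edge weight m u v (symmetric).\<close>

definition gdeg :: "'v set \<Rightarrow> ('v \<Rightarrow> 'v \<Rightarrow> bool) \<Rightarrow> ('v \<Rightarrow> 'v \<Rightarrow> real) \<Rightarrow> 'v \<Rightarrow> real" where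
  "gdeg V adj m x = (\<Sum>y\<in>{y\<in>V. adj x y}. m x y)"

definition gvol :: "'v set \<Rightarrow> ('v \<Rightarrow> 'v \<Rightarrow> bool) \<Rightarrow> ('v \<Rightarrow> 'v \<Rightarrow> real) \<Rightarrow> 'v set \<Rightarrow> real" where
  "gvol V adj m U = (\<Sum>x\<in>U. gdeg V adj m x)"

definition gcut :: "('v \<Rightarrow> 'v \<Rightarrow> bool) \<Rightarrow> ('v \<Rightarrow> 'v \<Rightarrow> real) \<Rightarrow> 'v set \<Rightarrow> 'v set \<Rightarrow> real" where
  "gcut adj m U1 U2 = (\<Sum>p\<in>{p\<in>U1 \<times> U2. adj (fst p) (snd p)}. m (fst p) (snd p))"

definition cheeger :: "'v set \<Rightarrow> ('v \<Rightarrow> 'v \<Rightarrow> bool) \<Rightarrow> ('v \<Rightarrow> 'v \<Rightarrow> real) \<Rightarrow> real" where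
  "cheeger V adj m = Min ((\<lambda>U. gcut adj m U (V - U) * gvol V adj m V
                               / (gvol V adj m U * gvol V adj m (V - U)))
                          ` {U. U \<noteq> {} \<and> U \<subset> V})"

definition is_expander :: "real \<Rightarrow> 'v set \<Rightarrow> ('v \<Rightarrow> 'v \<Rightarrow> bool) \<Rightarrow> ('v \<Rightarrow> 'v \<Rightarrow> real) \<Rightarrow> bool" where
  "is_expander lam V adj m \<longleftrightarrow> 1 - cheeger V adj m \<le> lam"

definition ground_adj :: "'v set set \<Rightarrow> 'v \<Rightarrow> 'v \<Rightarrow> bool" where
  "ground_adj E u v \<longleftrightarrow> u \<noteq> v \<and> (\<exists>\<tau>\<in>E. u \<in> \<tau> \<and> v \<in> \<tau>)"

definition ground_weight :: "'v set set \<Rightarrow> 'v set set set \<Rightarrow> ('v set set \<Rightarrow> real) \<Rightarrow> 'v \<Rightarrow> 'v \<Rightarrow> real" where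
  "ground_weight E T w u v = (\<Sum>\<tau>\<in>{\<tau>\<in>E. u \<in> \<tau> \<and> v \<in> \<tau>}. wE T w \<tau>)"

definition ground_graph_expander ::
  "real \<Rightarrow> 'v set \<Rightarrow> 'v set set \<Rightarrow> 'v set set set \<Rightarrow> ('v set set \<Rightarrow> real) \<Rightarrow> bool" where
  "ground_graph_expander lam V E T w \<longleftrightarrow> is_expander lam V (ground_adj E) (ground_weight E T w)"

text \<open>Vectors in F^V are functions 'v \<Rightarrow> 'f vanishing outside V.\<close>

definition vecs :: "'v set \<Rightarrow> ('v \<Rightarrow> 'f::zero) set" where
  "vecs V = {c. \<forall>v. v \<notin> V \<longrightarrow> c v = 0}"

definition dotp :: "'v set \<Rightarrow> ('v \<Rightarrow> 'f::comm_semiring_0) \<Rightarrow> ('v \<Rightarrow> 'f) \<Rightarrow> 'f" where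
  "dotp V e c = (\<Sum>v\<in>V. e v * c v)"

definition supp :: "('v \<Rightarrow> 'f::zero) \<Rightarrow> 'v set" where
  "supp e = {v. e v \<noteq> 0}"

definition lin_dep :: "'v set \<Rightarrow> ('v \<Rightarrow> 'f::field) set \<Rightarrow> (('v \<Rightarrow> 'f) \<Rightarrow> 'f) \<Rightarrow> bool" where
  "lin_dep V \<E> ld \<longleftrightarrow> (\<forall>e. e \<notin> \<E> \<longrightarrow> ld e = 0) \<and>
     (\<forall>c\<in>vecs V. (\<Sum>e\<in>\<E>. ld e * dotp V e c) = 0)"

definition modelled_over ::
  "'v set \<Rightarrow> 'v set set \<Rightarrow> 'v set set set \<Rightarrow> ('v \<Rightarrow> 'f::{field,finite}) set \<Rightarrow> bool" where
  "modelled_over V E T C \<longleftrightarrow>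
     (\<exists>\<E> \<T>. \<E> \<subseteq> vecs V \<and>
        C = {c\<in>vecs V. \<forall>e\<in>\<E>. dotp V e c = 0} \<and>
        bij_betw supp \<E> E \<and>
        (\<forall>ld\<in>\<T>. lin_dep V \<E> ld) \<and>
        T = (\<lambda>ld. supp ` {e\<in>\<E>. ld e \<noteq> 0}) ` \<T>)"

definition code_norm ::
  "'v set \<Rightarrow> 'v set set set \<Rightarrow> ('v set set \<Rightarrow> real) \<Rightarrow> ('v \<Rightarrow> 'f::zero) \<Rightarrow> real" where
  "code_norm V T w c = (1 / (\<Sum>v\<in>V. wV T w v)) * (\<Sum>v\<in>{v\<in>V. c v \<noteq> 0}. wV T w v)"

end

theory Submission
  imports Defs
begin

lemma tls_fin:
  assumes "two_layer_system s k K V E T"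
  shows "finite V" "finite E" "finite T" "\<And>\<tau>. \<tau>\<in>E \<Longrightarrow> \<tau> \<subseteq> V \<and> card \<tau> = k"
    "\<And>\<sigma>. \<sigma>\<in>T \<Longrightarrow> \<sigma> \<subseteq> E" "\<Union>E = V" "\<Union>T = E"
    "\<And>\<sigma> v. \<sigma>\<in>T \<Longrightarrow> v\<in>\<Union>\<sigma> \<Longrightarrow> 2 \<le> card {\<tau>\<in>\<sigma>. v \<in> \<tau>} \<and> card {\<tau>\<in>\<sigma>. v \<in> \<tau>} \<le> s"
proof -
  show fV: "finite V" using assms unfolding two_layer_system_def by auto
  have "E \<subseteq> Pow V" using assms unfolding two_layer_system_def by auto
  then show fE: "finite E" using fV finite_subset by blast
  have "T \<subseteq> Pow E" using assms unfolding two_layer_system_def by auto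
  then show "finite T" using fE finite_subset by blast
qed (use assms in \<open>auto simp: two_layer_system_def\<close>)

lemma gdeg_ground:
  assumes tls: "two_layer_system s k K V E T" and u: "u \<in> V"
  shows "gdeg V (ground_adj E) (ground_weight E T w) u
     = (real k - 1) * (\<Sum>\<tau>\<in>{\<tau>\<in>E. u\<in>\<tau>}. wE T w \<tau>)"
proof -
  note F = tls_fin[OF tls]
  have "gdeg V (ground_adj E) (ground_weight E T w) u
      = (\<Sum>y\<in>{y\<in>V. ground_adj E u y}. \<Sum>\<tau>\<in>{\<tau>\<in>E. u\<in>\<tau> \<and> y\<in>\<tau>}. wE T w \<tau>)"
    unfolding gdeg_def ground_weight_def by simp
  also have "\<dots> = (\<Sum>\<tau>\<in>E. \<Sum>y\<in>{y\<in>{y\<in>V. ground_adj E u y}. u\<in>\<tau> \<and> y\<in>\<tau>}. wE T w \<tau>)"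
    by (rule sum.swap_restrict) (use F in auto)
  also have "\<dots> = (\<Sum>\<tau>\<in>E. if u \<in> \<tau> then (real k - 1) * wE T w \<tau> else 0)"
  proof (rule sum.cong[OF refl])
    fix \<tau> assume t: "\<tau> \<in> E"
    show "(\<Sum>y\<in>{y\<in>{y\<in>V. ground_adj E u y}. u\<in>\<tau> \<and> y\<in>\<tau>}. wE T w \<tau>)
       = (if u \<in> \<tau> then (real k - 1) * wE T w \<tau> else 0)"
    proof (cases "u \<in> \<tau>")
      case True
      have eq: "{y\<in>{y\<in>V. ground_adj E u y}. u\<in>\<tau> \<and> y\<in>\<tau>} = \<tau> - {u}"
        using True t F(4)[OF t] unfolding ground_adj_def by auto
      have fin: "finite \<tau>" using F(1) F(4)[OF t] finite_subset by blast
      have ck: "card (\<tau> - {u}) = k - 1" using F(4)[OF t] True fin by simp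
      have "k \<ge> 1" using F(4)[OF t] True fin card_0_eq by fastforce
      then show ?thesis using True eq ck by (simp add: of_nat_diff)
    qed simp
  qed
  also have "\<dots> = (real k - 1) * (\<Sum>\<tau>\<in>{\<tau>\<in>E. u\<in>\<tau>}. wE T w \<tau>)"
    by (simp add: sum.inter_filter[OF F(2)] sum_distrib_left if_distrib cong: if_cong)
  finally show ?thesis .
qed

lemma D_eq:
  assumes tls: "two_layer_system s k K V E T"
  shows "(\<Sum>\<tau>\<in>{\<tau>\<in>E. u\<in>\<tau>}. wE T w \<tau>) = (\<Sum>\<sigma>\<in>T. real (card {\<tau>\<in>\<sigma>. u\<in>\<tau>}) * w \<sigma>)"
proof -
  note F = tls_fin[OF tls]
  have "(\<Sum>\<tau>\<in>{\<tau>\<in>E. u\<in>\<tau>}. wE T w \<tau>) = (\<Sum>\<tau>\<in>{\<tau>\<in>E. u\<in>\<tau>}. \<Sum>\<sigma>\<in>{\<sigma>\<in>T. \<tau>\<in>\<sigma>}. w \<sigma>)"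
    unfolding wE_def by simp
  also have "\<dots> = (\<Sum>\<sigma>\<in>T. \<Sum>\<tau>\<in>{\<tau>\<in>{\<tau>\<in>E. u\<in>\<tau>}. \<tau>\<in>\<sigma>}. w \<sigma>)"
    by (rule sum.swap_restrict) (use F in auto)
  also have "\<dots> = (\<Sum>\<sigma>\<in>T. real (card {\<tau>\<in>\<sigma>. u\<in>\<tau>}) * w \<sigma>)"
  proof (rule sum.cong[OF refl])
    fix \<sigma> assume "\<sigma> \<in> T"
    then have "{\<tau>\<in>{\<tau>\<in>E. u\<in>\<tau>}. \<tau>\<in>\<sigma>} = {\<tau>\<in>\<sigma>. u\<in>\<tau>}" using F(5) by auto
    then show "(\<Sum>\<tau>\<in>{\<tau>\<in>{\<tau>\<in>E. u\<in>\<tau>}. \<tau>\<in>\<sigma>}. w \<sigma>) = real (card {\<tau>\<in>\<sigma>. u\<in>\<tau>}) * w \<sigma>"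
      by simp
  qed
  finally show ?thesis .
qed

lemma D_bounds:
  assumes tls: "two_layer_system s k K V E T" and wpos: "\<forall>\<sigma>\<in>T. w \<sigma> > 0"
  shows "2 * wV T w u \<le> (\<Sum>\<tau>\<in>{\<tau>\<in>E. u\<in>\<tau>}. wE T w \<tau>)"
    "(\<Sum>\<tau>\<in>{\<tau>\<in>E. u\<in>\<tau>}. wE T w \<tau>) \<le> real s * wV T w u"
proof -
  note F = tls_fin[OF tls]
  have wv: "wV T w u = (\<Sum>\<sigma>\<in>T. if u \<in> \<Union>\<sigma> then w \<sigma> else 0)"
    unfolding wV_def by (simp add: sum.inter_filter[OF F(3)])
  have "(\<Sum>\<sigma>\<in>T. 2 * (if u \<in> \<Union>\<sigma> then w \<sigma> else 0)) \<le> (\<Sum>\<sigma>\<in>T. real (card {\<tau>\<in>\<sigma>. u\<in>\<tau>}) * w \<sigma>)"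
  proof (rule sum_mono)
    fix \<sigma> assume st: "\<sigma> \<in> T"
    show "2 * (if u \<in> \<Union>\<sigma> then w \<sigma> else 0) \<le> real (card {\<tau>\<in>\<sigma>. u\<in>\<tau>}) * w \<sigma>"
    proof (cases "u \<in> \<Union>\<sigma>")
      case True
      then have "2 \<le> real (card {\<tau>\<in>\<sigma>. u\<in>\<tau>})" using F(8)[OF st True] by linarith
      then show ?thesis using True wpos st by (simp add: mult_right_mono)
    qed (use wpos st in auto)
  qed
  then show "2 * wV T w u \<le> (\<Sum>\<tau>\<in>{\<tau>\<in>E. u\<in>\<tau>}. wE T w \<tau>)"
    unfolding D_eq[OF tls] wv by (simp add: sum_distrib_left)
  have "(\<Sum>\<sigma>\<in>T. real (card {\<tau>\<in>\<sigma>. u\<in>\<tau>}) * w \<sigma>) \<le> (\<Sum>\<sigma>\<in>T. real s * (if u \<in> \<Union>\<sigma> then w \<sigma> else 0))"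
  proof (rule sum_mono)
    fix \<sigma> assume st: "\<sigma> \<in> T"
    show "real (card {\<tau>\<in>\<sigma>. u\<in>\<tau>}) * w \<sigma> \<le> real s * (if u \<in> \<Union>\<sigma> then w \<sigma> else 0)"
    proof (cases "u \<in> \<Union>\<sigma>")
      case True
      then have "real (card {\<tau>\<in>\<sigma>. u\<in>\<tau>}) \<le> real s" using F(8)[OF st True] by linarith
      then show ?thesis using True wpos st by (simp add: mult_right_mono)
    next
      case False
      then have "{\<tau>\<in>\<sigma>. u\<in>\<tau>} = {}" by auto
      then show ?thesis using False by (simp only: card.empty) simp
    qed
  qed
  then show "(\<Sum>\<tau>\<in>{\<tau>\<in>E. u\<in>\<tau>}. wE T w \<tau>) \<le> real s * wV T w u"
    unfolding D_eq[OF tls] wv by (simp add: sum_distrib_left)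
qed

lemma wV_pos:
  assumes tls: "two_layer_system s k K V E T" and wpos: "\<forall>\<sigma>\<in>T. w \<sigma> > 0" and u: "u \<in> V"
  shows "wV T w u > 0"
proof -
  note F = tls_fin[OF tls]
  obtain \<tau> where t: "\<tau> \<in> E" "u \<in> \<tau>" using u F(6) by blast
  obtain \<sigma> where st: "\<sigma> \<in> T" "\<tau> \<in> \<sigma>" using t F(7) by blast
  have m: "\<sigma> \<in> {\<sigma>\<in>T. u \<in> \<Union>\<sigma>}" using st t by auto
  have "w \<sigma> \<le> wV T w u" unfolding wV_def
    by (rule member_le_sum[OF m]) (use wpos F(3) in auto)
  then show ?thesis using wpos st by force
qed

lemma key_other:
  fixes e c :: "'v \<Rightarrow> 'f::field"
  assumes fV: "finite V" and e: "e \<in> vecs V" and c: "c \<in> vecs V" and d: "dotp V e c = 0"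
    and u: "e u \<noteq> 0" "c u \<noteq> 0"
  shows "\<exists>v. v \<noteq> u \<and> e v \<noteq> 0 \<and> c v \<noteq> 0"
proof (rule ccontr)
  assume "\<not> ?thesis"
  then have z: "\<forall>v. v \<noteq> u \<longrightarrow> e v * c v = 0" by auto
  have uV: "u \<in> V" using e u unfolding vecs_def by auto
  have "dotp V e c = e u * c u + (\<Sum>v\<in>V-{u}. e v * c v)"
    unfolding dotp_def using sum.remove[OF fV uV] by blast
  also have "(\<Sum>v\<in>V-{u}. e v * c v) = 0" using z by (intro sum.neutral) auto
  finally show False using d u by simp
qed

lemma inner_ge:
  assumes tls: "two_layer_system s k K V E T" and wpos: "\<forall>\<sigma>\<in>T. w \<sigma> > 0"
    and SV: "S \<subseteq> V" and u: "u \<in> S"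
    and P: "\<forall>\<tau>\<in>E. \<forall>u\<in>\<tau>. u \<in> S \<longrightarrow> (\<exists>v\<in>\<tau>. v \<noteq> u \<and> v \<in> S)"
  shows "(\<Sum>\<tau>\<in>{\<tau>\<in>E. u\<in>\<tau>}. wE T w \<tau>)
     \<le> (\<Sum>y\<in>{y\<in>S. ground_adj E u y}. ground_weight E T w u y)"
proof -
  note F = tls_fin[OF tls]
  have fS: "finite S" using F(1) SV finite_subset by blast
  have wE0: "\<And>\<tau>. wE T w \<tau> \<ge> 0" unfolding wE_def using wpos by (intro sum_nonneg) auto
  have "(\<Sum>y\<in>{y\<in>S. ground_adj E u y}. ground_weight E T w u y)
      = (\<Sum>y\<in>{y\<in>S. ground_adj E u y}. \<Sum>\<tau>\<in>{\<tau>\<in>E. u\<in>\<tau> \<and> y\<in>\<tau>}. wE T w \<tau>)"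
    unfolding ground_weight_def by simp
  also have "\<dots> = (\<Sum>\<tau>\<in>E. \<Sum>y\<in>{y\<in>{y\<in>S. ground_adj E u y}. u\<in>\<tau> \<and> y\<in>\<tau>}. wE T w \<tau>)"
    by (rule sum.swap_restrict) (use F fS in auto)
  also have "\<dots> \<ge> (\<Sum>\<tau>\<in>E. if u \<in> \<tau> then wE T w \<tau> else 0)"
  proof (rule sum_mono)
    fix \<tau> assume t: "\<tau> \<in> E"
    show "(if u \<in> \<tau> then wE T w \<tau> else 0) \<le> (\<Sum>y\<in>{y\<in>{y\<in>S. ground_adj E u y}. u\<in>\<tau> \<and> y\<in>\<tau>}. wE T w \<tau>)"
    proof (cases "u \<in> \<tau>")
      case True
      obtain v where v: "v \<in> \<tau>" "v \<noteq> u" "v \<in> S" using P t True u by blast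
      have vin: "v \<in> {y\<in>{y\<in>S. ground_adj E u y}. u\<in>\<tau> \<and> y\<in>\<tau>}"
        using v True t unfolding ground_adj_def by auto
      have fin: "finite {y\<in>{y\<in>S. ground_adj E u y}. u\<in>\<tau> \<and> y\<in>\<tau>}" using fS by simp
      have "card {y\<in>{y\<in>S. ground_adj E u y}. u\<in>\<tau> \<and> y\<in>\<tau>} \<ge> 1"
        using vin fin by (metis One_nat_def Suc_leI card_gt_0_iff empty_iff)
      then have "real (card {y\<in>{y\<in>S. ground_adj E u y}. u\<in>\<tau> \<and> y\<in>\<tau>}) \<ge> 1" by simp
      then have "1 * wE T w \<tau> \<le> real (card {y\<in>{y\<in>S. ground_adj E u y}. u\<in>\<tau> \<and> y\<in>\<tau>}) * wE T w \<tau>"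
        using wE0 by (intro mult_right_mono) auto
      then show ?thesis using True by simp
    qed simp
  qed
  also have "(\<Sum>\<tau>\<in>E. if u \<in> \<tau> then wE T w \<tau> else 0) = (\<Sum>\<tau>\<in>{\<tau>\<in>E. u\<in>\<tau>}. wE T w \<tau>)"
    by (simp add: sum.inter_filter[OF F(2)])
  finally show ?thesis .
qed

lemma gvol_split:
  assumes fV: "finite V" and SV: "S \<subseteq> V"
  shows "gvol V adj m S = (\<Sum>u\<in>S. \<Sum>y\<in>{y\<in>S. adj u y}. m u y) + gcut adj m S (V - S)"
proof -
  have fS: "finite S" using fV SV finite_subset by blast
  have "gvol V adj m S = (\<Sum>u\<in>S. (\<Sum>y\<in>{y\<in>S. adj u y}. m u y) + (\<Sum>y\<in>{y\<in>V-S. adj u y}. m u y))"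
    unfolding gvol_def gdeg_def
  proof (rule sum.cong[OF refl])
    fix u assume "u \<in> S"
    have "{y\<in>V. adj u y} = {y\<in>S. adj u y} \<union> {y\<in>V-S. adj u y}" using SV by auto
    then show "(\<Sum>y\<in>{y\<in>V. adj u y}. m u y) = (\<Sum>y\<in>{y\<in>S. adj u y}. m u y) + (\<Sum>y\<in>{y\<in>V-S. adj u y}. m u y)"
      using fV fS by (simp add: sum.union_disjoint disjoint_iff)
  qed
  also have "\<dots> = (\<Sum>u\<in>S. \<Sum>y\<in>{y\<in>S. adj u y}. m u y) + (\<Sum>u\<in>S. \<Sum>y\<in>{y\<in>V-S. adj u y}. m u y)"
    by (simp add: sum.distrib)
  also have "(\<Sum>u\<in>S. \<Sum>y\<in>{y\<in>V-S. adj u y}. m u y) = gcut adj m S (V - S)"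
  proof -
    have "{p\<in>S \<times> (V-S). adj (fst p) (snd p)} = Sigma S (\<lambda>u. {y\<in>V-S. adj u y})" by auto
    then show ?thesis unfolding gcut_def using fV fS
      by (simp add: sum.Sigma split_def)
  qed
  finally show ?thesis .
qed



lemma arith2:
  fixes x y :: real assumes x: "x \<ge> 2" and y: "y \<ge> 2"
  shows "16 / (x ^ 4 * (x - 1)^2 * y) \<le> 2 / (x * (y - 1))"
proof -
  have x3: "x ^ 3 \<ge> 2 ^ 3" using x by (intro power_mono) auto
  have x1: "(x - 1)^2 \<ge> 1" using x by (simp add: one_le_power)
  have s3: "x ^ 3 * (x - 1)^2 \<ge> 8" using mult_mono[OF x3 x1] x by simp
  have "2 * (x ^ 3 * (x - 1)^2) * y \<ge> 2 * 8 * y" using s3 y by (intro mult_right_mono) auto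
  then have h: "16 * (y - 1) \<le> 2 * (x ^ 3 * (x - 1)^2) * y" by (simp add: algebra_simps)
  have "x * (16 * (y - 1)) \<le> x * (2 * (x ^ 3 * (x - 1)^2) * y)" using h x by (intro mult_left_mono) auto
  moreover have "x ^ 4 = x * x ^ 3" by (simp add: power_numeral_reduce)
  ultimately have h2: "16 * (x * (y - 1)) \<le> 2 * (x ^ 4 * (x - 1)^2 * y)" by (simp add: mult_ac)
  have P: "x ^ 4 * (x - 1)^2 * y > 0" using x y by simp
  have Q: "x * (y - 1) > 0" using x y by simp
  show ?thesis using h2 P Q by (simp add: divide_simps mult_ac)
qed

lemma final_arith:
  fixes x y lam N a b :: real
  assumes x: "x \<ge> 2" and y: "y \<ge> 2" and lam: "lam \<ge> 0" and a: "a > 0" and b: "b > 0"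
    and xb: "b - lam * (y - 1) * b \<le> (y - 1) * a" and N: "N \<ge> 2 * a / (x * b)"
  shows "N \<ge> 16 / (x ^ 4 * (x - 1)^2 * y) * (1 - x * (x - 1) * (y - 1) * lam)"
proof (cases "1 - x * (x - 1) * (y - 1) * lam \<le> 0")
  case True
  have "16 / (x ^ 4 * (x - 1)^2 * y) \<ge> 0" using x y by simp
  then have "16 / (x ^ 4 * (x - 1)^2 * y) * (1 - x * (x - 1) * (y - 1) * lam) \<le> 0" using True
    using True by (intro mult_nonneg_nonpos) auto
  moreover have "2 * a / (x * b) \<ge> 0" using a b x by simp
  ultimately show ?thesis using N by linarith
next
  case False
  define R where "R = 1 - x * (x - 1) * (y - 1) * lam"
  have Rpos: "R > 0" using False R_def by simp
  have ss: "x * (x - 1) \<ge> 1" using mult_mono[of 1 x 1 "x - 1"] x by simp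
  have step1: "2 * a / (x * b) \<ge> 2 / (x * (y - 1)) * (1 - (y - 1) * lam)"
  proof -
    have "(1 - (y - 1) * lam) * b \<le> (y - 1) * a" using xb by (simp add: algebra_simps)
    then have "(1 - (y - 1) * lam) / (y - 1) \<le> a / b"
      using b y by (simp add: divide_simps mult.commute)
    then have "2 / x * ((1 - (y - 1) * lam) / (y - 1)) \<le> 2 / x * (a / b)"
      using x by (intro mult_left_mono) auto
    then show ?thesis by (simp add: field_simps)
  qed
  have step2: "1 - (y - 1) * lam \<ge> R"
  proof -
    have "(y - 1) * lam * 1 \<le> (y - 1) * lam * (x * (x - 1))"
      using ss y lam by (intro mult_left_mono) auto
    then show ?thesis unfolding R_def by (simp add: algebra_simps)
  qed
  have "16 / (x ^ 4 * (x - 1)^2 * y) * R \<le> 2 / (x * (y - 1)) * R"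
    using arith2[OF x y] Rpos by (intro mult_right_mono) auto
  also have "\<dots> \<le> 2 / (x * (y - 1)) * (1 - (y - 1) * lam)"
    using step2 x y by (intro mult_left_mono) auto
  finally show ?thesis using step1 N unfolding R_def by linarith
qed

lemma arith1:
  fixes K1 a b lam :: real
  assumes K1: "K1 > 0" and a: "a > 0" and lam: "lam \<ge> 0"
    and h: "(1 - lam) * (K1 * a * (K1 * (b - a))) \<le> (K1 * a - a) * (K1 * b)"
  shows "b - lam * K1 * b \<le> K1 * a"
proof -
  have "(K1 * a) * ((1 - lam) * (K1 * (b - a))) \<le> (K1 * a) * ((K1 - 1) * b)"
    using h by (simp only: mult_ac right_diff_distrib left_diff_distrib mult_1_left mult_1_right) 
  then have h2: "(1 - lam) * (K1 * (b - a)) \<le> (K1 - 1) * b"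
    using K1 a by (simp add: mult_le_cancel_left_pos)
  have "lam * K1 * a \<ge> 0" using lam K1 a by simp
  then show ?thesis using h2 by (simp add: algebra_simps)
qed

theorem theorem8p1:
  fixes s k K :: nat and V :: "'v set" and E :: "'v set set" and T :: "'v set set set"
    and w :: "'v set set \<Rightarrow> real" and lam :: real
    and C :: "('v \<Rightarrow> 'f::{field,finite}) set"
  assumes "two_layer_system s k K V E T"
    and "\<forall>\<sigma>\<in>T. w \<sigma> > 0"
    and "lam \<ge> 0"
    and "ground_graph_expander lam V E T w"
    and "modelled_over V E T C"
  shows "\<forall>c\<in>C. c \<noteq> (\<lambda>_. 0) \<longrightarrow>
    code_norm V T w c \<ge> 16 / (real s ^ 4 * (real s - 1)^2 * real k)
                          * (1 - real s * (real s - 1) * (real k - 1) * lam)"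
proof (intro ballI impI)
  note tls = assms(1) and wpos = assms(2) and lam0 = assms(3)
  note F = tls_fin[OF tls]
  fix c assume cC: "c \<in> C" and cnz: "c \<noteq> (\<lambda>_. 0)"
  obtain \<E> :: "('v \<Rightarrow> 'f) set" where EV: "\<E> \<subseteq> vecs V" and Cdef: "C = {c\<in>vecs V. \<forall>e\<in>\<E>. dotp V e c = 0}"
    and bij: "bij_betw supp \<E> E"
    using assms(5) unfolding modelled_over_def by blast
  have cV: "c \<in> vecs V" and cd: "\<forall>e\<in>\<E>. dotp V e c = 0" using cC Cdef by auto
  define S where "S = {v\<in>V. c v \<noteq> 0}"
  have SV: "S \<subseteq> V" unfolding S_def by auto
  have fS: "finite S" using F(1) SV finite_subset by blast
  obtain u0 where u0: "c u0 \<noteq> 0" using cnz by auto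
  then have u0S: "u0 \<in> S" using cV unfolding S_def vecs_def by auto
  have P: "\<forall>\<tau>\<in>E. \<forall>u\<in>\<tau>. u \<in> S \<longrightarrow> (\<exists>v\<in>\<tau>. v \<noteq> u \<and> v \<in> S)"
  proof (intro ballI impI)
    fix \<tau> u assume t: "\<tau> \<in> E" and ut: "u \<in> \<tau>" and uS: "u \<in> S"
    obtain e where e: "e \<in> \<E>" "supp e = \<tau>" using bij t unfolding bij_betw_def by auto
    have "\<exists>v. v \<noteq> u \<and> e v \<noteq> 0 \<and> c v \<noteq> 0"
      by (rule key_other[OF F(1) _ cV]) (use e EV cd ut uS in \<open>auto simp: supp_def S_def\<close>)
    then obtain v where v: "v \<noteq> u" "e v \<noteq> 0" "c v \<noteq> 0" by blast
    have "v \<in> \<tau>" using v e unfolding supp_def by auto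
    moreover have "v \<in> S" using v(3) cV unfolding S_def vecs_def by auto
    ultimately show "\<exists>v\<in>\<tau>. v \<noteq> u \<and> v \<in> S" using v by blast
  qed
  obtain \<tau>0 where t0: "\<tau>0 \<in> E" "u0 \<in> \<tau>0" using u0S SV F(6) by blast
  obtain \<sigma>0 where s0: "\<sigma>0 \<in> T" "\<tau>0 \<in> \<sigma>0" using t0 F(7) by blast
  have u0s: "u0 \<in> \<Union>\<sigma>0" using s0 t0 by blast
  have s2: "s \<ge> 2" using F(8)[OF s0(1) u0s] by linarith
  have k2: "k \<ge> 2"
  proof -
    obtain v where v: "v \<in> \<tau>0" "v \<noteq> u0" using P t0 u0S by blast
    have fin: "finite \<tau>0" using F(1) F(4)[OF t0(1)] finite_subset by blast
    have "card {u0, v} \<le> card \<tau>0" using v t0 fin by (intro card_mono) auto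
    then show ?thesis using v F(4)[OF t0(1)] by simp
  qed
  define D where "D = (\<lambda>u. \<Sum>\<tau>\<in>{\<tau>\<in>E. u\<in>\<tau>}. wE T w \<tau>)"
  have Dlo: "\<And>u. 2 * wV T w u \<le> D u" and Dhi: "\<And>u. D u \<le> real s * wV T w u"
    unfolding D_def using D_bounds[OF tls wpos] by auto
  have Dpos: "\<And>u. u \<in> V \<Longrightarrow> D u > 0" using Dlo wV_pos[OF tls wpos] by (smt (verit))
  define adj where "adj = ground_adj E"
  define m where "m = ground_weight E T w"
  have deg: "\<And>u. u \<in> V \<Longrightarrow> gdeg V adj m u = (real k - 1) * D u"
    unfolding adj_def m_def D_def by (rule gdeg_ground[OF tls])
  have vol: "\<And>U. U \<subseteq> V \<Longrightarrow> gvol V adj m U = (real k - 1) * sum D U"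
    unfolding gvol_def using deg by (auto simp: sum_distrib_left intro: sum.cong)
  define a where "a = sum D S"
  define b where "b = sum D V"
  have apos: "a > 0" unfolding a_def using fS u0S Dpos SV by (intro sum_pos2[of _ u0]) (auto intro: less_imp_le)
  have ab: "a \<le> b" unfolding a_def b_def using SV F(1) Dpos by (intro sum_mono2) (auto intro: less_imp_le)
  have bpos: "b > 0" using apos ab by simp
  have inner: "sum D S \<le> (\<Sum>u\<in>S. \<Sum>y\<in>{y\<in>S. adj u y}. m u y)"
    unfolding D_def adj_def m_def
    by (rule sum_mono, rule inner_ge[OF tls wpos SV _ P]) auto
  have xbound: "b - lam * (real k - 1) * b \<le> (real k - 1) * a"
  proof (cases "S = V")
    case True
    then have "a = b" unfolding a_def b_def by simp
    moreover have "lam * (real k - 1) * b \<ge> 0" using lam0 k2 bpos by simp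
    moreover have "1 * a \<le> (real k - 1) * a" using k2 apos by (intro mult_right_mono) auto
    ultimately show ?thesis by linarith
  next
    case False
    then have SsV: "S \<subset> V" using SV by auto
    have fin: "finite {U. U \<noteq> {} \<and> U \<subset> V}" by (rule finite_subset[OF _ finite_Pow_iff[THEN iffD2, OF F(1)]]) blast
    have "cheeger V adj m \<le> gcut adj m S (V - S) * gvol V adj m V / (gvol V adj m S * gvol V adj m (V - S))"
      unfolding cheeger_def by (rule Min_le[OF finite_imageI[OF fin] imageI]) (use SsV u0S in blast)
    moreover have "1 - cheeger V adj m \<le> lam" using assms(4)
      unfolding ground_graph_expander_def is_expander_def adj_def m_def by simp
    ultimately have ch: "1 - lam \<le> gcut adj m S (V - S) * gvol V adj m V / (gvol V adj m S * gvol V adj m (V - S))"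
      by simp
    have bma: "sum D (V - S) = b - a" unfolding a_def b_def using sum_diff[OF F(1) SV] by simp
    obtain v where v: "v \<in> V" "v \<notin> S" using SsV by auto
    have "sum D (V - S) > 0" using v F(1) Dpos by (intro sum_pos2[of _ v]) (auto intro: less_imp_le)
    then have bma_pos: "b - a > 0" using bma by simp
    have k1: "real k - 1 > 0" using k2 by simp
    have volS: "gvol V adj m S = (real k - 1) * a" using vol SV a_def by simp
    have volV: "gvol V adj m V = (real k - 1) * b" using vol b_def by simp
    have volVS: "gvol V adj m (V - S) = (real k - 1) * (b - a)" using vol bma by simp
    have cut: "gcut adj m S (V - S) \<le> (real k - 1) * a - a"
      using gvol_split[OF F(1) SV, of adj m] volS inner a_def by simp
    have den: "gvol V adj m S * gvol V adj m (V - S) > 0" using volS volVS k1 apos bma_pos by simp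
    have "(1 - lam) * (gvol V adj m S * gvol V adj m (V - S)) \<le> gcut adj m S (V - S) * gvol V adj m V"
      using ch den by (simp add: pos_le_divide_eq)
    also have "\<dots> \<le> ((real k - 1) * a - a) * ((real k - 1) * b)"
      unfolding volV by (rule mult_right_mono[OF cut]) (use k1 bpos in simp)
    finally have "(1 - lam) * ((real k - 1) * a * ((real k - 1) * (b - a))) \<le> ((real k - 1) * a - a) * ((real k - 1) * b)"
      by (simp only: volS volVS)
    then show ?thesis using arith1[OF k1 apos lam0] by blast
  qed
  have wS: "a / real s \<le> (\<Sum>v\<in>S. wV T w v)"
  proof -
    have "a \<le> (\<Sum>v\<in>S. real s * wV T w v)" unfolding a_def by (rule sum_mono) (rule Dhi)
    then show ?thesis using s2 by (simp add: sum_distrib_left[symmetric] pos_divide_le_eq mult.commute)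
  qed
  have wVV: "(\<Sum>v\<in>V. wV T w v) \<le> b / 2"
  proof -
    have "(\<Sum>v\<in>V. 2 * wV T w v) \<le> b" unfolding b_def by (rule sum_mono) (rule Dlo)
    then show ?thesis by (simp add: sum_distrib_left[symmetric])
  qed
  have wVpos: "(\<Sum>v\<in>V. wV T w v) > 0"
    using u0S SV F(1) wV_pos[OF tls wpos] by (intro sum_pos2[of _ u0]) (auto intro: less_imp_le)
  have norm_eq: "code_norm V T w c = (\<Sum>v\<in>S. wV T w v) / (\<Sum>v\<in>V. wV T w v)"
    unfolding code_norm_def S_def by simp
  have norm_ge: "code_norm V T w c \<ge> 2 * a / (real s * b)"
  proof -
    have "2 * a / (real s * b) = (a / real s) / (b / 2)" by (simp add: field_simps)
    also have "\<dots> \<le> (\<Sum>v\<in>S. wV T w v) / (b / 2)" by (rule divide_right_mono[OF wS]) (use bpos in simp)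
    also have "\<dots> \<le> (\<Sum>v\<in>S. wV T w v) / (\<Sum>v\<in>V. wV T w v)"
      using wVV wVpos wS apos s2 by (intro divide_left_mono) (auto intro: order_trans[rotated])
    finally show ?thesis using norm_eq by simp
  qed
  show "code_norm V T w c \<ge> 16 / (real s ^ 4 * (real s - 1)^2 * real k)
                          * (1 - real s * (real s - 1) * (real k - 1) * lam)"
    by (rule final_arith[OF _ _ lam0 apos bpos xbound norm_ge]) (use s2 k2 in auto)
qed

end
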